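(* Let $\nu,\nu'$ be slack vectors and let $\Gamma\in\mathbb L_2^\nu$. Assume $\|\nu'\|_\infty\le\frac1{2d}$. (1) If for every edge $ij\in\mathcal E$ we have $\Gamma_i+\nu'_{ij}\in\Sigma_d$ and $\Gamma_j+\nu'_{ji}\in\Sigma_d$, then there exists $\Gamma'\in\mathbb L_2^{\nu'}$ with $\|\Gamma-\Gamma'\|_1\le2\|\nu-\nu'\|_1$. (2) If $\nu=0$, then there exists $\Gamma'\in\mathbb L_2^{\nu'}$ with $\|\Gamma-\Gamma'\|_1\le6d\deg(G)\|\nu'\|_1$.
   Context: Let $G=(\mathcal V,\mathcal E)$ be a graph with $\mathcal V=\{1,\dots,n\}$, edges ordered pairs $ij$, maximum degree $\deg(G)$, and $d\ge1$; $\Sigma_d$ is the probability simplex in $\mathbb R^d$ and $\mathbb 1$ the all-ones vector. A marginal vector $\Gamma$ consists of $\Gamma_i\in\mathbb R^d$ ($i\in\mathcal V$) and $\Gamma_{ij}\in\mathbb R^{d\times d}$ ($ij\in\mathcal E$); $\|\cdot\|_1$ is the sum of absolute values of all entries and $\|\cdot\|_\infty$ the maximum absolute entry. A slack vector $\nu$ consists of vectors $\nu_{ij},\nu_{ji}\in\mathbb R^d$ for each $ij\in\mathcal E$ with $\nu_{ij}^\top\mathbb 1=\nu_{ji}^\top\mathbb 1=0$. The slack polytope is $\mathbb L_2^\nu=\{\Gamma\ge0:\Gamma_i\in\Sigma_d\ \forall i;\ \Gamma_{ij}\mathbb 1=\Gamma_i+\nu_{ij},\ \Gamma_{ij}^\top\mathbb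 1=\Gamma_j+\nu_{ji},\ \mathbb 1^\top\Gamma_{ij}\mathbb 1=1\ \forall ij\in\mathcal E\}$; $\mathbb L_2=\mathbb L_2^0$. *)

theory Defs
  imports Complex_Main
begin

text \<open>Graph: vertices {1..n}; E a set of ordered pairs (i,j), each undirected edge
  listed exactly once in one orientation, no loops.\<close>
definition graph :: "nat \<Rightarrow> (nat \<times> nat) set \<Rightarrow> bool" where
  "graph n E \<longleftrightarrow> E \<subseteq> {1..n} \<times> {1..n} \<and> (\<forall>(i,j)\<in>E. i \<noteq> j \<and> (j,i) \<notin> E)"

definition max_deg :: "nat \<Rightarrow> (nat \<times> nat) set \<Rightarrow> nat" where
  "max_deg n E = Max (insert 0 ((\<lambda>i. card {e\<in>E. fst e = i \<or> snd e = i}) ` {1..n}))"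

definition simplex :: "nat \<Rightarrow> (nat \<Rightarrow> real) \<Rightarrow> bool" where
  "simplex d x \<longleftrightarrow> (\<forall>a<d. 0 \<le> x a) \<and> (\<Sum>a<d. x a) = 1"

definition slack_vec :: "(nat \<times> nat) set \<Rightarrow> nat \<Rightarrow> (nat \<times> nat \<Rightarrow> nat \<Rightarrow> real) \<Rightarrow> bool" where
  "slack_vec E d nu \<longleftrightarrow> (\<forall>(i,j)\<in>E. (\<Sum>a<d. nu (i,j) a) = 0 \<and> (\<Sum>a<d. nu (j,i) a) = 0)"

text \<open>Slack polytope L_2^nu. A marginal vector is a pair (Gn, Ge): Gn i a is entry a of
  Gamma_i, Ge (i,j) a b is entry (a,b) of Gamma_ij.\<close>
definition L2slack :: "nat \<Rightarrow> (nat \<times> nat) set \<Rightarrow> nat \<Rightarrow> (nat \<times> nat \<Rightarrow> nat \<Rightarrow> real)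
    \<Rightarrow> (nat \<Rightarrow> nat \<Rightarrow> real) \<Rightarrow> (nat \<times> nat \<Rightarrow> nat \<Rightarrow> nat \<Rightarrow> real) \<Rightarrow> bool" where
  "L2slack n E d nu Gn Ge \<longleftrightarrow>
     (\<forall>i\<in>{1..n}. \<forall>a<d. 0 \<le> Gn i a) \<and>
     (\<forall>e\<in>E. \<forall>a<d. \<forall>b<d. 0 \<le> Ge e a b) \<and>
     (\<forall>i\<in>{1..n}. simplex d (Gn i)) \<and>
     (\<forall>(i,j)\<in>E.
        (\<forall>a<d. (\<Sum>b<d. Ge (i,j) a b) = Gn i a + nu (i,j) a) \<and>
        (\<forall>b<d. (\<Sum>a<d. Ge (i,j) a b) = Gn j b + nu (j,i) b) \<and>
        (\<Sum>a<d. \<Sum>b<d. Ge (i,j) a b) = 1)"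

definition marg_dist1 :: "nat \<Rightarrow> (nat \<times> nat) set \<Rightarrow> nat
    \<Rightarrow> (nat \<Rightarrow> nat \<Rightarrow> real) \<Rightarrow> (nat \<times> nat \<Rightarrow> nat \<Rightarrow> nat \<Rightarrow> real)
    \<Rightarrow> (nat \<Rightarrow> nat \<Rightarrow> real) \<Rightarrow> (nat \<times> nat \<Rightarrow> nat \<Rightarrow> nat \<Rightarrow> real) \<Rightarrow> real" where
  "marg_dist1 n E d Gn Ge Gn' Ge' =
     (\<Sum>i\<in>{1..n}. \<Sum>a<d. \<bar>Gn i a - Gn' i a\<bar>) +
     (\<Sum>e\<in>E. \<Sum>a<d. \<Sum>b<d. \<bar>Ge e a b - Ge' e a b\<bar>)"

definition slack_norm1 :: "(nat \<times> nat) set \<Rightarrow> nat \<Rightarrow> (nat \<times> nat \<Rightarrow> nat \<Rightarrow> real) \<Rightarrow> real" where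
  "slack_norm1 E d nu = (\<Sum>(i,j)\<in>E. \<Sum>a<d. \<bar>nu (i,j) a\<bar> + \<bar>nu (j,i) a\<bar>)"

definition slack_norminf :: "(nat \<times> nat) set \<Rightarrow> nat \<Rightarrow> (nat \<times> nat \<Rightarrow> nat \<Rightarrow> real) \<Rightarrow> real" where
  "slack_norminf E d nu = Max (insert 0
      ((\<lambda>((i,j),a). \<bar>nu (i,j) a\<bar>) ` (E \<times> {..<d}) \<union> (\<lambda>((i,j),a). \<bar>nu (j,i) a\<bar>) ` (E \<times> {..<d})))"

end

theory Submission
  imports Defs
begin

lemma adjust_rows:
  fixes M :: "nat \<Rightarrow> nat \<Rightarrow> real" and r' :: "nat \<Rightarrow> real"
  assumes M0: "\<forall>a<d. \<forall>b<d. 0 \<le> M a b" and r0: "\<forall>a<d. 0 \<le> r' a"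
    and tot: "(\<Sum>a<d. r' a) = (\<Sum>a<d. \<Sum>b<d. M a b)"
  shows "\<exists>M'. (\<forall>a<d. \<forall>b<d. 0 \<le> M' a b) \<and> (\<forall>a<d. (\<Sum>b<d. M' a b) = r' a)
     \<and> (\<forall>b<d. (\<Sum>a<d. M' a b) = (\<Sum>a<d. M a b))
     \<and> (\<Sum>a<d. \<Sum>b<d. \<bar>M a b - M' a b\<bar>) \<le> (\<Sum>a<d. \<bar>(\<Sum>b<d. M a b) - r' a\<bar>)"
proof -
  define r where "r a = (\<Sum>b<d. M a b)" for a
  define f where "f a = min 1 (r' a / r a)" for a
  define mn where "mn a = min (r a) (r' a)" for a
  define M1 where "M1 a b = f a * M a b" for a b
  define w where "w b = (\<Sum>a<d. M a b - M1 a b)" for b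
  define \<delta> where "\<delta> = (\<Sum>a<d. r' a - mn a)"
  define M' where "M' a b = M1 a b + (r' a - mn a) * w b / \<delta>" for a b
  have r0': "0 \<le> r a" if "a < d" for a unfolding r_def using M0 that by (auto intro: sum_nonneg)
  have f0: "0 \<le> f a" "f a \<le> 1" if "a < d" for a
    using r0' r0 that unfolding f_def by auto
  have mn0: "0 \<le> r' a - mn a" "0 \<le> r a - mn a" for a unfolding mn_def by auto
  have rowM1: "(\<Sum>b<d. M1 a b) = mn a" if "a < d" for a
  proof -
    have "(\<Sum>b<d. M1 a b) = f a * r a" unfolding M1_def r_def by (simp add: sum_distrib_left)
    also have "\<dots> = mn a"
    proof (cases "r a = 0")
      case True then show ?thesis using r0 that unfolding mn_def by auto
    next
      case False then have "r a > 0" using r0'[OF that] by auto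
      then show ?thesis unfolding f_def mn_def
        by (cases "r' a \<le> r a") (auto simp: min_def field_simps)
    qed
    finally show ?thesis .
  qed
  have MM1: "0 \<le> M a b - M1 a b" if "a<d" "b<d" for a b
  proof -
    have "M a b - M1 a b = (1 - f a) * M a b" unfolding M1_def by algebra
    then show ?thesis using f0[OF that(1)] M0 that by simp
  qed
  have M10: "0 \<le> M1 a b" if "a<d" "b<d" for a b
    unfolding M1_def using f0[OF that(1)] M0 that by simp
  have w0: "0 \<le> w b" if "b < d" for b unfolding w_def using MM1 that by (auto intro: sum_nonneg)
  have rm: "(\<Sum>a<d. r a - mn a) = \<delta>"
  proof -
    have "(\<Sum>a<d. r a - mn a) = (\<Sum>a<d. r a) - (\<Sum>a<d. mn a)" by (simp add: sum_subtractf)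
    also have "\<dots> = (\<Sum>a<d. r' a) - (\<Sum>a<d. mn a)" using tot unfolding r_def by simp
    also have "\<dots> = \<delta>" unfolding \<delta>_def by (simp add: sum_subtractf)
    finally show ?thesis .
  qed
  have swp: "(\<Sum>b<d. w b) = (\<Sum>a<d. \<Sum>b<d. M a b - M1 a b)" unfolding w_def by (rule sum.swap)
  have sumw: "(\<Sum>b<d. w b) = \<delta>"
  proof -
    have "(\<Sum>a<d. \<Sum>b<d. M a b - M1 a b) = (\<Sum>a<d. r a - mn a)"
      by (rule sum.cong) (simp_all add: sum_subtractf rowM1 r_def)
    then show ?thesis using swp rm by simp
  qed
  have d0: "0 \<le> \<delta>" unfolding \<delta>_def using mn0 by (simp add: sum_nonneg)
  have zero1: "r' a - mn a = 0" if "\<delta> = 0" "a < d" for a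
  proof -
    have "\<forall>a\<in>{..<d}. r' a - mn a = 0"
      using that(1) mn0 unfolding \<delta>_def by (subst sum_nonneg_eq_0_iff[symmetric]) auto
    then show ?thesis using that by auto
  qed
  have zero2: "w b = 0" if "\<delta> = 0" "b < d" for b
  proof -
    have "\<forall>b\<in>{..<d}. w b = 0"
      using that(1) w0 sumw by (subst sum_nonneg_eq_0_iff[symmetric]) auto
    then show ?thesis using that by auto
  qed
  show ?thesis
  proof (rule exI[of _ M'], intro conjI allI impI)
    fix a b assume "a < d" "b < d"
    then show "0 \<le> M' a b" unfolding M'_def using M10 mn0 w0 d0
      by (simp add: add_nonneg_nonneg divide_nonneg_nonneg)
  next
    fix a assume a: "a < d"
    have "(\<Sum>b<d. M' a b) = mn a + (r' a - mn a) * (\<Sum>b<d. w b) / \<delta>"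
      unfolding M'_def by (simp add: sum.distrib rowM1[OF a] sum_distrib_left sum_divide_distrib)
    also have "\<dots> = r' a" using sumw zero1[OF _ a] by (cases "\<delta> = 0") auto
    finally show "(\<Sum>b<d. M' a b) = r' a" .
  next
    fix b assume b: "b < d"
    have "(\<Sum>a<d. M' a b) = (\<Sum>a<d. M1 a b) + w b * (\<Sum>a<d. r' a - mn a) / \<delta>"
      unfolding M'_def by (simp add: sum.distrib sum_distrib_left sum_distrib_right sum_divide_distrib mult.commute)
    also have "\<dots> = (\<Sum>a<d. M1 a b) + w b"
      using zero2[OF _ b] unfolding \<delta>_def[symmetric] by (cases "\<delta> = 0") auto
    also have "\<dots> = (\<Sum>a<d. M a b)" unfolding w_def by (simp add: sum_subtractf)
    finally show "(\<Sum>a<d. M' a b) = (\<Sum>a<d. M a b)" .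
  next
    have "(\<Sum>a<d. \<Sum>b<d. \<bar>M a b - M' a b\<bar>)
        \<le> (\<Sum>a<d. \<Sum>b<d. (M a b - M1 a b) + (r' a - mn a) * w b / \<delta>)"
    proof (intro sum_mono)
      fix a b assume "a \<in> {..<d}" "b \<in> {..<d}"
      then have "0 \<le> M a b - M1 a b" "0 \<le> (r' a - mn a) * w b / \<delta>"
        using MM1 mn0 w0 d0 by (auto simp: divide_nonneg_nonneg)
      then show "\<bar>M a b - M' a b\<bar> \<le> (M a b - M1 a b) + (r' a - mn a) * w b / \<delta>"
        unfolding M'_def by linarith
    qed
    also have "\<dots> = (\<Sum>a<d. \<Sum>b<d. M a b - M1 a b) + (\<Sum>a<d. (r' a - mn a)) * (\<Sum>b<d. w b) / \<delta>"
    proof -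
      have "(\<Sum>a<d. r' a - mn a) * (\<Sum>b<d. w b) / \<delta> = (\<Sum>a<d. \<Sum>b<d. (r' a - mn a) * w b / \<delta>)"
        by (subst sum_product) (simp add: sum_divide_distrib)
      then show ?thesis by (simp only: sum.distrib)
    qed
    also have "(\<Sum>a<d. \<Sum>b<d. M a b - M1 a b) = \<delta>"
      using sumw swp by simp
    also have "\<delta> + (\<Sum>a<d. (r' a - mn a)) * (\<Sum>b<d. w b) / \<delta> \<le> \<delta> + \<delta>"
      unfolding sumw \<delta>_def[symmetric] by (cases "\<delta> = 0") auto
    also have "\<delta> + \<delta> = (\<Sum>a<d. \<bar>(\<Sum>b<d. M a b) - r' a\<bar>)"
    proof -
      have "(\<Sum>a<d. \<bar>(\<Sum>b<d. M a b) - r' a\<bar>) = (\<Sum>a<d. (r a - mn a) + (r' a - mn a))"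
        by (rule sum.cong) (auto simp: r_def mn_def min_def)
      also have "\<dots> = (\<Sum>a<d. r a - mn a) + \<delta>" unfolding \<delta>_def by (simp only: sum.distrib)
      also have "(\<Sum>a<d. r a - mn a) = \<delta>" by (rule rm)
      finally show ?thesis by simp
    qed
    finally show "(\<Sum>a<d. \<Sum>b<d. \<bar>M a b - M' a b\<bar>) \<le> (\<Sum>a<d. \<bar>(\<Sum>b<d. M a b) - r' a\<bar>)" .
  qed
qed


lemma adjust2:
  fixes M :: "nat \<Rightarrow> nat \<Rightarrow> real" and r' c' :: "nat \<Rightarrow> real"
  assumes M0: "\<forall>a<d. \<forall>b<d. 0 \<le> M a b" and r0: "\<forall>a<d. 0 \<le> r' a" and c0: "\<forall>b<d. 0 \<le> c' b"
    and totr: "(\<Sum>a<d. r' a) = (\<Sum>a<d. \<Sum>b<d. M a b)"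
    and totc: "(\<Sum>b<d. c' b) = (\<Sum>a<d. \<Sum>b<d. M a b)"
  shows "\<exists>M'. (\<forall>a<d. \<forall>b<d. 0 \<le> M' a b) \<and> (\<forall>a<d. (\<Sum>b<d. M' a b) = r' a)
     \<and> (\<forall>b<d. (\<Sum>a<d. M' a b) = c' b)
     \<and> (\<Sum>a<d. \<Sum>b<d. \<bar>M a b - M' a b\<bar>) \<le> (\<Sum>a<d. \<bar>(\<Sum>b<d. M a b) - r' a\<bar>) + (\<Sum>b<d. \<bar>(\<Sum>a<d. M a b) - c' b\<bar>)"
proof -
  obtain M1 where M10: "\<forall>a<d. \<forall>b<d. 0 \<le> M1 a b" and M1r: "\<forall>a<d. (\<Sum>b<d. M1 a b) = r' a"
    and M1c: "\<forall>b<d. (\<Sum>a<d. M1 a b) = (\<Sum>a<d. M a b)"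
    and M1d: "(\<Sum>a<d. \<Sum>b<d. \<bar>M a b - M1 a b\<bar>) \<le> (\<Sum>a<d. \<bar>(\<Sum>b<d. M a b) - r' a\<bar>)"
    using adjust_rows[OF M0 r0 totr] by blast
  have "(\<Sum>b<d. c' b) = (\<Sum>b<d. \<Sum>a<d. M1 a b)"
  proof -
    have "(\<Sum>b<d. \<Sum>a<d. M1 a b) = (\<Sum>a<d. \<Sum>b<d. M1 a b)" by (rule sum.swap)
    also have "\<dots> = (\<Sum>a<d. r' a)" using M1r by simp
    finally show ?thesis using totr totc by simp
  qed
  moreover have "\<forall>b<d. \<forall>a<d. 0 \<le> (\<lambda>b a. M1 a b) b a" using M10 by simp
  ultimately obtain M2 where M20: "\<forall>b<d. \<forall>a<d. 0 \<le> M2 b a" and M2r: "\<forall>b<d. (\<Sum>a<d. M2 b a) = c' b"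
    and M2c: "\<forall>a<d. (\<Sum>b<d. M2 b a) = (\<Sum>b<d. M1 a b)"
    and M2d: "(\<Sum>b<d. \<Sum>a<d. \<bar>M1 a b - M2 b a\<bar>) \<le> (\<Sum>b<d. \<bar>(\<Sum>a<d. M1 a b) - c' b\<bar>)"
    using adjust_rows[of d "\<lambda>b a. M1 a b" c'] c0 by auto
  show ?thesis
  proof (rule exI[of _ "\<lambda>a b. M2 b a"], intro conjI)
    show "\<forall>a<d. \<forall>b<d. 0 \<le> M2 b a" using M20 by simp
    show "\<forall>a<d. (\<Sum>b<d. M2 b a) = r' a" using M2c M1r by simp
    show "\<forall>b<d. (\<Sum>a<d. M2 b a) = c' b" using M2r by simp
    have "(\<Sum>a<d. \<Sum>b<d. \<bar>M a b - M2 b a\<bar>) \<le> (\<Sum>a<d. \<Sum>b<d. \<bar>M a b - M1 a b\<bar> + \<bar>M1 a b - M2 b a\<bar>)"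
      by (intro sum_mono) linarith
    also have "\<dots> = (\<Sum>a<d. \<Sum>b<d. \<bar>M a b - M1 a b\<bar>) + (\<Sum>a<d. \<Sum>b<d. \<bar>M1 a b - M2 b a\<bar>)"
      by (simp only: sum.distrib)
    also have "(\<Sum>a<d. \<Sum>b<d. \<bar>M1 a b - M2 b a\<bar>) = (\<Sum>b<d. \<Sum>a<d. \<bar>M1 a b - M2 b a\<bar>)"
      by (rule sum.swap)
    finally have "(\<Sum>a<d. \<Sum>b<d. \<bar>M a b - M2 b a\<bar>) \<le> (\<Sum>a<d. \<Sum>b<d. \<bar>M a b - M1 a b\<bar>) + (\<Sum>b<d. \<Sum>a<d. \<bar>M1 a b - M2 b a\<bar>)" .
    moreover have "(\<Sum>b<d. \<bar>(\<Sum>a<d. M1 a b) - c' b\<bar>) = (\<Sum>b<d. \<bar>(\<Sum>a<d. M a b) - c' b\<bar>)"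
      using M1c by simp
    ultimately show "(\<Sum>a<d. \<Sum>b<d. \<bar>M a b - M2 b a\<bar>) \<le> (\<Sum>a<d. \<bar>(\<Sum>b<d. M a b) - r' a\<bar>) + (\<Sum>b<d. \<bar>(\<Sum>a<d. M a b) - c' b\<bar>)"
      using M1d M2d by linarith
  qed
qed


lemma repair:
  fixes Gn' :: "nat \<Rightarrow> nat \<Rightarrow> real"
  assumes G: "graph n E" and nu': "slack_vec E d nu'"
    and Gam: "L2slack n E d nu Gn Ge"
    and Gs: "\<forall>i\<in>{1..n}. simplex d (Gn' i)"
    and pos: "\<forall>(i,j)\<in>E. \<forall>a<d. 0 \<le> Gn' i a + nu' (i,j) a \<and> 0 \<le> Gn' j a + nu' (j,i) a"
  shows "\<exists>Ge'. L2slack n E d nu' Gn' Ge' \<and> marg_dist1 n E d Gn Ge Gn' Ge' \<le>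
     (\<Sum>i\<in>{1..n}. \<Sum>a<d. \<bar>Gn i a - Gn' i a\<bar>) +
     (\<Sum>(i,j)\<in>E. (\<Sum>a<d. \<bar>Gn i a + nu (i,j) a - (Gn' i a + nu' (i,j) a)\<bar>)
                 + (\<Sum>a<d. \<bar>Gn j a + nu (j,i) a - (Gn' j a + nu' (j,i) a)\<bar>))"
proof -
  define Q where "Q e M \<longleftrightarrow> (\<forall>a<d. \<forall>b<d. 0 \<le> M a b)
     \<and> (\<forall>a<d. (\<Sum>b<d. M a b) = Gn' (fst e) a + nu' e a)
     \<and> (\<forall>b<d. (\<Sum>a<d. M a b) = Gn' (snd e) b + nu' (prod.swap e) b)
     \<and> (\<Sum>a<d. \<Sum>b<d. \<bar>Ge e a b - M a b\<bar>) \<le>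
        (\<Sum>a<d. \<bar>Gn (fst e) a + nu e a - (Gn' (fst e) a + nu' e a)\<bar>)
      + (\<Sum>a<d. \<bar>Gn (snd e) a + nu (prod.swap e) a - (Gn' (snd e) a + nu' (prod.swap e) a)\<bar>)"
    for e M
  have "\<exists>M. Q e M" if e: "e \<in> E" for e
  proof -
    obtain i j where ij: "e = (i,j)" by (cases e)
    have ijn: "i \<in> {1..n}" "j \<in> {1..n}" using G e ij unfolding graph_def by auto
    have Ge0: "\<forall>a<d. \<forall>b<d. 0 \<le> Ge e a b" using Gam e unfolding L2slack_def by auto
    have rows: "\<forall>a<d. (\<Sum>b<d. Ge e a b) = Gn i a + nu (i,j) a"
      and cols: "\<forall>b<d. (\<Sum>a<d. Ge e a b) = Gn j b + nu (j,i) b"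
      and tot: "(\<Sum>a<d. \<Sum>b<d. Ge e a b) = 1"
      using Gam e ij unfolding L2slack_def by auto
    have s0: "(\<Sum>a<d. nu' (i,j) a) = 0" "(\<Sum>a<d. nu' (j,i) a) = 0"
      using nu' e ij unfolding slack_vec_def by auto
    have s1: "(\<Sum>a<d. Gn' i a) = 1" "(\<Sum>a<d. Gn' j a) = 1"
      using Gs ijn unfolding simplex_def by auto
    have p: "\<forall>a<d. 0 \<le> Gn' i a + nu' (i,j) a" "\<forall>a<d. 0 \<le> Gn' j a + nu' (j,i) a"
      using pos e ij by auto
    have t1: "(\<Sum>a<d. Gn' i a + nu' (i,j) a) = (\<Sum>a<d. \<Sum>b<d. Ge e a b)"
      using s0 s1 tot by (simp add: sum.distrib)
    have t2: "(\<Sum>a<d. Gn' j a + nu' (j,i) a) = (\<Sum>a<d. \<Sum>b<d. Ge e a b)"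
      using s0 s1 tot by (simp add: sum.distrib)
    obtain M where M: "(\<forall>a<d. \<forall>b<d. 0 \<le> M a b)" "(\<forall>a<d. (\<Sum>b<d. M a b) = Gn' i a + nu' (i,j) a)"
      "(\<forall>b<d. (\<Sum>a<d. M a b) = Gn' j b + nu' (j,i) b)"
      "(\<Sum>a<d. \<Sum>b<d. \<bar>Ge e a b - M a b\<bar>) \<le> (\<Sum>a<d. \<bar>(\<Sum>b<d. Ge e a b) - (Gn' i a + nu' (i,j) a)\<bar>)
          + (\<Sum>b<d. \<bar>(\<Sum>a<d. Ge e a b) - (Gn' j b + nu' (j,i) b)\<bar>)"
      using adjust2[OF Ge0 p t1 t2] by blast
    have "Q e M" unfolding Q_def using M rows cols ij by simp
    then show ?thesis by blast
  qed
  then obtain F where F: "\<forall>e\<in>E. Q e (F e)" by metis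
  show ?thesis
  proof (rule exI[of _ F], intro conjI)
    show "L2slack n E d nu' Gn' F"
      unfolding L2slack_def
    proof (intro conjI)
      show "\<forall>i\<in>{1..n}. \<forall>a<d. 0 \<le> Gn' i a" using Gs unfolding simplex_def by auto
      show "\<forall>e\<in>E. \<forall>a<d. \<forall>b<d. 0 \<le> F e a b" using F unfolding Q_def by auto
      show "\<forall>i\<in>{1..n}. simplex d (Gn' i)" by (rule Gs)
      show "\<forall>(i, j)\<in>E. (\<forall>a<d. (\<Sum>b<d. F (i, j) a b) = Gn' i a + nu' (i, j) a) \<and>
        (\<forall>b<d. (\<Sum>a<d. F (i, j) a b) = Gn' j b + nu' (j, i) b) \<and> (\<Sum>a<d. \<Sum>b<d. F (i, j) a b) = 1"
      proof (intro ballI, clarify, intro conjI)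
        fix i j assume e: "(i,j) \<in> E"
        then have Q: "Q (i,j) (F (i,j))" using F by auto
        then show "\<forall>a<d. (\<Sum>b<d. F (i, j) a b) = Gn' i a + nu' (i, j) a"
          "\<forall>b<d. (\<Sum>a<d. F (i, j) a b) = Gn' j b + nu' (j, i) b" unfolding Q_def by auto
        have ijn: "i \<in> {1..n}" using G e unfolding graph_def by auto
        have "(\<Sum>a<d. \<Sum>b<d. F (i, j) a b) = (\<Sum>a<d. Gn' i a + nu' (i, j) a)"
          using Q unfolding Q_def by auto
        also have "\<dots> = 1" using Gs ijn nu' e unfolding simplex_def slack_vec_def by (auto simp: sum.distrib)
        finally show "(\<Sum>a<d. \<Sum>b<d. F (i, j) a b) = 1" .
      qed
    qed
    show "marg_dist1 n E d Gn Ge Gn' F \<le>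
     (\<Sum>i\<in>{1..n}. \<Sum>a<d. \<bar>Gn i a - Gn' i a\<bar>) +
     (\<Sum>(i,j)\<in>E. (\<Sum>a<d. \<bar>Gn i a + nu (i,j) a - (Gn' i a + nu' (i,j) a)\<bar>)
                 + (\<Sum>a<d. \<bar>Gn j a + nu (j,i) a - (Gn' j a + nu' (j,i) a)\<bar>))"
      unfolding marg_dist1_def
    proof (rule add_left_mono, rule sum_mono)
      fix e assume e: "e \<in> E"
      obtain i j where ij: "e = (i,j)" by (cases e)
      show "(\<Sum>a<d. \<Sum>b<d. \<bar>Ge e a b - F e a b\<bar>) \<le> (case e of (i,j) \<Rightarrow>
        (\<Sum>a<d. \<bar>Gn i a + nu (i,j) a - (Gn' i a + nu' (i,j) a)\<bar>)
                 + (\<Sum>a<d. \<bar>Gn j a + nu (j,i) a - (Gn' j a + nu' (j,i) a)\<bar>))"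
        using F e ij unfolding Q_def by auto
    qed
  qed
qed


lemma part1:
  assumes G: "graph n E" and nu': "slack_vec E d nu'"
    and Gam: "L2slack n E d nu Gn Ge"
    and H: "\<forall>(i,j)\<in>E. simplex d (\<lambda>a. Gn i a + nu' (i,j) a) \<and> simplex d (\<lambda>a. Gn j a + nu' (j,i) a)"
  shows "\<exists>Gn' Ge'. L2slack n E d nu' Gn' Ge' \<and>
                 marg_dist1 n E d Gn Ge Gn' Ge' \<le> 2 * slack_norm1 E d (\<lambda>e a. nu e a - nu' e a)"
proof -
  have Gs: "\<forall>i\<in>{1..n}. simplex d (Gn i)" using Gam unfolding L2slack_def by auto
  have pos: "\<forall>(i,j)\<in>E. \<forall>a<d. 0 \<le> Gn i a + nu' (i,j) a \<and> 0 \<le> Gn j a + nu' (j,i) a"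
    using H unfolding simplex_def by auto
  obtain Ge' where L: "L2slack n E d nu' Gn Ge'" and D: "marg_dist1 n E d Gn Ge Gn Ge' \<le>
     (\<Sum>i\<in>{1..n}. \<Sum>a<d. \<bar>Gn i a - Gn i a\<bar>) +
     (\<Sum>(i,j)\<in>E. (\<Sum>a<d. \<bar>Gn i a + nu (i,j) a - (Gn i a + nu' (i,j) a)\<bar>)
                 + (\<Sum>a<d. \<bar>Gn j a + nu (j,i) a - (Gn j a + nu' (j,i) a)\<bar>))"
    using repair[OF G nu' Gam Gs pos] by blast
  have "(\<Sum>(i,j)\<in>E. (\<Sum>a<d. \<bar>Gn i a + nu (i,j) a - (Gn i a + nu' (i,j) a)\<bar>)
                 + (\<Sum>a<d. \<bar>Gn j a + nu (j,i) a - (Gn j a + nu' (j,i) a)\<bar>))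
      = slack_norm1 E d (\<lambda>e a. nu e a - nu' e a)"
    unfolding slack_norm1_def by (rule sum.cong) (auto simp: sum.distrib)
  moreover have "0 \<le> slack_norm1 E d (\<lambda>e a. nu e a - nu' e a)"
    unfolding slack_norm1_def by (auto intro!: sum_nonneg)
  ultimately show ?thesis using L D by (intro exI[of _ Gn] exI[of _ Ge']) auto
qed


lemma half_bound:
  fixes v :: "nat \<Rightarrow> real"
  assumes "(\<Sum>b<d. v b) = 0" "a < d"
  shows "\<bar>v a\<bar> \<le> (\<Sum>b<d. \<bar>v b\<bar>) / 2"
proof -
  have a: "a \<in> {..<d}" using assms by simp
  have 1: "(\<Sum>b<d. \<bar>v b\<bar>) = \<bar>v a\<bar> + (\<Sum>b\<in>{..<d}-{a}. \<bar>v b\<bar>)"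
    using sum.remove[OF _ a] by simp
  have 2: "(\<Sum>b<d. v b) = v a + (\<Sum>b\<in>{..<d}-{a}. v b)"
    using sum.remove[OF _ a] by simp
  have 3: "\<bar>\<Sum>b\<in>{..<d}-{a}. v b\<bar> \<le> (\<Sum>b\<in>{..<d}-{a}. \<bar>v b\<bar>)" by (rule sum_abs)
  show ?thesis using 1 2 3 assms(1) by linarith
qed


lemma part2:
  assumes G: "graph n E" and d: "1 \<le> d" and nu': "slack_vec E d nu'"
    and Gam: "L2slack n E d nu Gn Ge"
    and small: "slack_norminf E d nu' \<le> 1 / (2 * real d)"
    and nu0: "\<forall>e\<in>E. \<forall>a<d. nu e a = 0 \<and> nu (prod.swap e) a = 0"
  shows "\<exists>Gn' Ge'. L2slack n E d nu' Gn' Ge' \<and>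
                 marg_dist1 n E d Gn Ge Gn' Ge' \<le> 6 * real d * real (max_deg n E) * slack_norm1 E d nu'"
proof -
  define P where "P = E \<union> prod.swap ` E"
  define w where "w p = (\<Sum>a<d. \<bar>nu' p a\<bar>)" for p
  define N where "N = slack_norm1 E d nu'"
  define \<Delta> where "\<Delta> = real (max_deg n E)"
  define h where "h i = (\<Sum>p\<in>P. if fst p = i then w p else 0) / 2" for i
  define m where "m i = min (1 / (2 * real d)) (h i)" for i
  define Gn' where "Gn' i a = (1 - real d * m i) * Gn i a + m i" for i a
  have Esub: "E \<subseteq> {1..n} \<times> {1..n}" and Eirr: "\<And>i j. (i,j) \<in> E \<Longrightarrow> i \<noteq> j \<and> (j,i) \<notin> E"
    using G unfolding graph_def by auto
  have finE: "finite E" using Esub finite_subset by blast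
  have finP: "finite P" unfolding P_def using finE by simp
  have Psub: "P \<subseteq> {1..n} \<times> {1..n}" unfolding P_def using Esub by auto
  have w0: "0 \<le> w p" for p unfolding w_def by (auto intro: sum_nonneg)
  have dpos: "0 < real d" using d by simp
  have N1: "N = (\<Sum>p\<in>P. w p)"
  proof -
    have "N = (\<Sum>e\<in>E. w e + w (prod.swap e))"
      unfolding N_def slack_norm1_def w_def by (rule sum.cong) (auto simp: sum.distrib)
    also have "\<dots> = (\<Sum>e\<in>E. w e) + (\<Sum>e\<in>E. w (prod.swap e))" by (simp add: sum.distrib)
    also have "(\<Sum>e\<in>E. w (prod.swap e)) = (\<Sum>p\<in>prod.swap ` E. w p)"
      by (subst sum.reindex) (auto simp: inj_on_def)
    also have "(\<Sum>e\<in>E. w e) + (\<Sum>p\<in>prod.swap ` E. w p) = (\<Sum>p\<in>P. w p)"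
      unfolding P_def
    proof (rule sum.union_disjoint[symmetric])
      show "E \<inter> prod.swap ` E = {}" using Eirr by auto
    qed (use finE in auto)
    finally show ?thesis .
  qed
  have N0: "0 \<le> N" unfolding N1 using w0 by (simp add: sum_nonneg)
  have svP: "(\<Sum>a<d. nu' p a) = 0" if "p \<in> P" for p
    using that nu' unfolding P_def slack_vec_def by auto
  have halfP: "\<bar>nu' p a\<bar> \<le> h (fst p)" if "p \<in> P" "a < d" for p a
  proof -
    have "\<bar>nu' p a\<bar> \<le> w p / 2" unfolding w_def by (rule half_bound[OF svP[OF that(1)] that(2)])
    also have "w p \<le> (\<Sum>q\<in>P. if fst q = fst p then w q else 0)"
      using member_le_sum[of p P "\<lambda>q. if fst q = fst p then w q else 0"] that finP w0 by auto
    finally show ?thesis unfolding h_def by simp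
  qed
  have infP: "\<bar>nu' p a\<bar> \<le> 1 / (2 * real d)" if "p \<in> P" "a < d" for p a
  proof -
    let ?S = "insert 0 ((\<lambda>((i,j),a). \<bar>nu' (i,j) a\<bar>) ` (E \<times> {..<d}) \<union> (\<lambda>((i,j),a). \<bar>nu' (j,i) a\<bar>) ` (E \<times> {..<d}))"
    have fin: "finite ?S" using finE by auto
    have "\<bar>nu' p a\<bar> \<in> ?S"
    proof -
      obtain i j where ij: "p = (i,j)" by (cases p)
      show ?thesis
      proof (cases "p \<in> E")
        case True
        then have "((i,j),a) \<in> E \<times> {..<d}" using ij that by auto
        then show ?thesis using ij by force
      next
        case False
        then have "(j,i) \<in> E" using that ij unfolding P_def by auto
        then have "((j,i),a) \<in> E \<times> {..<d}" using that by auto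
        then show ?thesis using ij by force
      qed
    qed
    then have "\<bar>nu' p a\<bar> \<le> Max ?S" using fin by (rule Max_ge[rotated])
    then show ?thesis using small unfolding slack_norminf_def by linarith
  qed
  have h0: "0 \<le> h i" for i unfolding h_def using w0 by (auto intro: sum_nonneg)
  have m0: "0 \<le> m i" for i unfolding m_def using h0 dpos by auto
  have mle: "m i \<le> h i" "m i \<le> 1 / (2 * real d)" for i unfolding m_def by auto
  have dm: "real d * m i \<le> 1/2" for i
  proof -
    have "real d * m i \<le> real d * (1 / (2 * real d))" using mle(2) dpos by (intro mult_left_mono) auto
    then show ?thesis using dpos by simp
  qed
  have cover: "\<bar>nu' p a\<bar> \<le> m (fst p)" if "p \<in> P" "a < d" for p a
    using halfP[OF that] infP[OF that] unfolding m_def by simp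
  have GnS: "simplex d (Gn i)" if "i \<in> {1..n}" for i using Gam that unfolding L2slack_def by auto
  have Gs: "\<forall>i\<in>{1..n}. simplex d (Gn' i)"
  proof
    fix i assume i: "i \<in> {1..n}"
    have s: "(\<Sum>a<d. Gn i a) = 1" "\<forall>a<d. 0 \<le> Gn i a" using GnS[OF i] unfolding simplex_def by auto
    have "(\<Sum>a<d. Gn' i a) = (1 - real d * m i) * (\<Sum>a<d. Gn i a) + real d * m i"
      unfolding Gn'_def by (simp add: sum.distrib sum_distrib_left)
    also have "\<dots> = 1" using s by simp
    finally show "simplex d (Gn' i)" unfolding simplex_def Gn'_def using s dm[of i] m0[of i]
      by (auto intro!: add_nonneg_nonneg mult_nonneg_nonneg)
  qed
  have Gn'ge: "m i \<le> Gn' i a" if "i \<in> {1..n}" "a < d" for i a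
    using GnS[OF that(1)] that(2) dm[of i] unfolding simplex_def Gn'_def by (auto intro!: mult_nonneg_nonneg)
  have pos: "\<forall>(i,j)\<in>E. \<forall>a<d. 0 \<le> Gn' i a + nu' (i,j) a \<and> 0 \<le> Gn' j a + nu' (j,i) a"
  proof (clarify, intro conjI)
    fix i j a assume e: "(i,j) \<in> E" and a: "a < d"
    have P1: "(i,j) \<in> P" "(j,i) \<in> P" using e unfolding P_def by force+
    have ij: "i \<in> {1..n}" "j \<in> {1..n}" using e Esub by auto
    show "0 \<le> Gn' i a + nu' (i,j) a" using cover[OF P1(1) a] Gn'ge[OF ij(1) a] by auto
    show "0 \<le> Gn' j a + nu' (j,i) a" using cover[OF P1(2) a] Gn'ge[OF ij(2) a] by auto
  qed
  obtain Ge' where L: "L2slack n E d nu' Gn' Ge'" and D: "marg_dist1 n E d Gn Ge Gn' Ge' \<le>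
     (\<Sum>i\<in>{1..n}. \<Sum>a<d. \<bar>Gn i a - Gn' i a\<bar>) +
     (\<Sum>(i,j)\<in>E. (\<Sum>a<d. \<bar>Gn i a + nu (i,j) a - (Gn' i a + nu' (i,j) a)\<bar>)
                 + (\<Sum>a<d. \<bar>Gn j a + nu (j,i) a - (Gn' j a + nu' (j,i) a)\<bar>))"
    using repair[OF G nu' Gam Gs pos] by blast
  have nd: "(\<Sum>a<d. \<bar>Gn i a - Gn' i a\<bar>) \<le> 2 * real d * m i" if i: "i \<in> {1..n}" for i
  proof -
    have s: "(\<Sum>a<d. Gn i a) = 1" "\<forall>a<d. 0 \<le> Gn i a" using GnS[OF i] unfolding simplex_def by auto
    have "(\<Sum>a<d. \<bar>Gn i a - Gn' i a\<bar>) \<le> (\<Sum>a<d. real d * m i * Gn i a + m i)"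
    proof (rule sum_mono)
      fix a assume "a \<in> {..<d}"
      then have "0 \<le> real d * m i * Gn i a" using s m0[of i] by auto
      moreover have "Gn i a - Gn' i a = real d * m i * Gn i a - m i" unfolding Gn'_def by algebra
      ultimately show "\<bar>Gn i a - Gn' i a\<bar> \<le> real d * m i * Gn i a + m i" using m0[of i] by linarith
    qed
    also have "\<dots> = real d * m i * (\<Sum>a<d. Gn i a) + real d * m i"
      by (simp add: sum.distrib sum_distrib_left)
    also have "\<dots> = 2 * real d * m i" using s by simp
    finally show ?thesis .
  qed
  have ed: "(\<Sum>a<d. \<bar>Gn i a + nu p a - (Gn' i a + nu' p a)\<bar>) \<le> 2 * real d * m i + w p"
    if i: "i \<in> {1..n}" and p: "\<forall>a<d. nu p a = 0" for i p
  proof -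
    have "(\<Sum>a<d. \<bar>Gn i a + nu p a - (Gn' i a + nu' p a)\<bar>) \<le> (\<Sum>a<d. \<bar>Gn i a - Gn' i a\<bar> + \<bar>nu' p a\<bar>)"
      using p by (intro sum_mono) auto
    also have "\<dots> = (\<Sum>a<d. \<bar>Gn i a - Gn' i a\<bar>) + w p" unfolding w_def by (simp add: sum.distrib)
    finally show ?thesis using nd[OF i] by linarith
  qed
  have step1: "marg_dist1 n E d Gn Ge Gn' Ge' \<le> (\<Sum>i\<in>{1..n}. 2 * real d * m i) +
      (\<Sum>e\<in>E. (2 * real d * m (fst e) + w e) + (2 * real d * m (snd e) + w (prod.swap e)))"
  proof -
    have "(\<Sum>(i,j)\<in>E. (\<Sum>a<d. \<bar>Gn i a + nu (i,j) a - (Gn' i a + nu' (i,j) a)\<bar>)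
                 + (\<Sum>a<d. \<bar>Gn j a + nu (j,i) a - (Gn' j a + nu' (j,i) a)\<bar>))
        \<le> (\<Sum>e\<in>E. (2 * real d * m (fst e) + w e) + (2 * real d * m (snd e) + w (prod.swap e)))"
    proof (rule sum_mono)
      fix e assume e: "e \<in> E"
      obtain i j where ij: "e = (i,j)" by (cases e)
      have ijn: "i \<in> {1..n}" "j \<in> {1..n}" using e ij Esub by auto
      have z: "\<forall>a<d. nu (i,j) a = 0" "\<forall>a<d. nu (j,i) a = 0" using nu0 e ij by auto
      show "(case e of (i,j) \<Rightarrow> (\<Sum>a<d. \<bar>Gn i a + nu (i,j) a - (Gn' i a + nu' (i,j) a)\<bar>)
                 + (\<Sum>a<d. \<bar>Gn j a + nu (j,i) a - (Gn' j a + nu' (j,i) a)\<bar>))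
          \<le> (2 * real d * m (fst e) + w e) + (2 * real d * m (snd e) + w (prod.swap e))"
        using ed[OF ijn(1) z(1)] ed[OF ijn(2) z(2)] ij by simp
    qed
    moreover have "(\<Sum>i\<in>{1..n}. \<Sum>a<d. \<bar>Gn i a - Gn' i a\<bar>) \<le> (\<Sum>i\<in>{1..n}. 2 * real d * m i)"
      using nd by (intro sum_mono) auto
    ultimately show ?thesis using D by linarith
  qed
  have sumh: "(\<Sum>i\<in>{1..n}. h i) = N / 2"
  proof -
    have "(\<Sum>i\<in>{1..n}. \<Sum>p\<in>P. if fst p = i then w p else 0) = (\<Sum>p\<in>P. \<Sum>i\<in>{1..n}. if fst p = i then w p else 0)"
      by (rule sum.swap)
    also have "\<dots> = (\<Sum>p\<in>P. w p)"
    proof (rule sum.cong)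
      fix p assume "p \<in> P"
      then have "fst p \<in> {1..n}" using Psub by auto
      then show "(\<Sum>i\<in>{1..n}. if fst p = i then w p else 0) = w p" by simp
    qed simp
    finally show ?thesis unfolding h_def N1 by (simp add: sum_divide_distrib[symmetric])
  qed
  have card_le: "real (card {e\<in>E. fst e = v \<or> snd e = v}) \<le> \<Delta>" if "v \<in> {1..n}" for v
  proof -
    have "card {e\<in>E. fst e = v \<or> snd e = v} \<in> insert 0 ((\<lambda>i. card {e\<in>E. fst e = i \<or> snd e = i}) ` {1..n})"
      using that by auto
    then have "card {e\<in>E. fst e = v \<or> snd e = v} \<le> max_deg n E" unfolding max_deg_def
      by (intro Max_ge) auto
    then show ?thesis unfolding \<Delta>_def by simp
  qed
  have sumE: "(\<Sum>e\<in>E. h (fst e) + h (snd e)) \<le> \<Delta> * N / 2"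
  proof -
    have "(\<Sum>e\<in>E. h (fst e) + h (snd e)) = (\<Sum>e\<in>E. \<Sum>p\<in>P. if fst p = fst e \<or> fst p = snd e then w p else 0) / 2"
    proof -
      have "h (fst e) + h (snd e) = (\<Sum>p\<in>P. if fst p = fst e \<or> fst p = snd e then w p else 0) / 2"
        if e: "e \<in> E" for e
      proof -
        have ne: "fst e \<noteq> snd e" using Eirr[of "fst e" "snd e"] e by auto
        have "(\<Sum>p\<in>P. if fst p = fst e then w p else 0) + (\<Sum>p\<in>P. if fst p = snd e then w p else 0)
          = (\<Sum>p\<in>P. if fst p = fst e \<or> fst p = snd e then w p else 0)"
          unfolding sum.distrib[symmetric] using ne by (intro sum.cong) auto
        then show ?thesis unfolding h_def by simp
      qed
      then have "(\<Sum>e\<in>E. h (fst e) + h (snd e)) = (\<Sum>e\<in>E. (\<Sum>p\<in>P. if fst p = fst e \<or> fst p = snd e then w p else 0) / 2)"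
        by (rule sum.cong[OF refl])
      then show ?thesis by (simp add: sum_divide_distrib)
    qed
    also have "(\<Sum>e\<in>E. \<Sum>p\<in>P. if fst p = fst e \<or> fst p = snd e then w p else 0)
        = (\<Sum>p\<in>P. \<Sum>e\<in>E. if fst e = fst p \<or> snd e = fst p then w p else 0)"
      by (subst sum.swap) (auto intro!: sum.cong)
    also have "\<dots> = (\<Sum>p\<in>P. w p * real (card {e\<in>E. fst e = fst p \<or> snd e = fst p}))"
    proof (rule sum.cong)
      fix p assume "p \<in> P"
      show "(\<Sum>e\<in>E. if fst e = fst p \<or> snd e = fst p then w p else 0) = w p * real (card {e\<in>E. fst e = fst p \<or> snd e = fst p})"
        using finE by (simp add: sum.If_cases Int_def mult.commute)
    qed simp
    also have "\<dots> \<le> (\<Sum>p\<in>P. w p * \<Delta>)"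
    proof (rule sum_mono)
      fix p assume "p \<in> P"
      then have "fst p \<in> {1..n}" using Psub by auto
      then show "w p * real (card {e\<in>E. fst e = fst p \<or> snd e = fst p}) \<le> w p * \<Delta>"
        using card_le w0 by (intro mult_left_mono) auto
    qed
    also have "\<dots> = \<Delta> * N" unfolding N1 by (simp add: sum_distrib_left mult.commute)
    finally show ?thesis by (simp add: divide_right_mono)
  qed
  have step2: "marg_dist1 n E d Gn Ge Gn' Ge' \<le> real d * N + real d * \<Delta> * N + N"
  proof -
    have a1: "(\<Sum>i\<in>{1..n}. 2 * real d * m i) \<le> real d * N"
    proof -
      have "(\<Sum>i\<in>{1..n}. 2 * real d * m i) \<le> (\<Sum>i\<in>{1..n}. 2 * real d * h i)"
        using mle dpos by (intro sum_mono mult_left_mono) auto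
      also have "\<dots> = 2 * real d * (N / 2)" by (simp only: sum_distrib_left[symmetric] sumh)
      finally show ?thesis by simp
    qed
    have "(\<Sum>e\<in>E. (2 * real d * m (fst e) + w e) + (2 * real d * m (snd e) + w (prod.swap e)))
        = 2 * real d * (\<Sum>e\<in>E. m (fst e) + m (snd e)) + (\<Sum>e\<in>E. w e + w (prod.swap e))"
    proof -
      have "(\<Sum>e\<in>E. (2 * real d * m (fst e) + w e) + (2 * real d * m (snd e) + w (prod.swap e)))
        = (\<Sum>e\<in>E. 2 * real d * (m (fst e) + m (snd e)) + (w e + w (prod.swap e)))"
        by (rule sum.cong) (simp_all add: algebra_simps)
      also have "\<dots> = 2 * real d * (\<Sum>e\<in>E. m (fst e) + m (snd e)) + (\<Sum>e\<in>E. w e + w (prod.swap e))"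
        by (subst sum.distrib) (simp only: sum_distrib_left)
      finally show ?thesis .
    qed
    also have "(\<Sum>e\<in>E. w e + w (prod.swap e)) = N"
      unfolding N_def slack_norm1_def w_def by (rule sum.cong) (auto simp: sum.distrib)
    finally have a2': "(\<Sum>e\<in>E. (2 * real d * m (fst e) + w e) + (2 * real d * m (snd e) + w (prod.swap e)))
        = 2 * real d * (\<Sum>e\<in>E. m (fst e) + m (snd e)) + N" .
    have "(\<Sum>e\<in>E. m (fst e) + m (snd e)) \<le> (\<Sum>e\<in>E. h (fst e) + h (snd e))"
      using mle by (intro sum_mono add_mono) auto
    then have "(\<Sum>e\<in>E. m (fst e) + m (snd e)) \<le> \<Delta> * N / 2" using sumE by linarith
    then have "2 * real d * (\<Sum>e\<in>E. m (fst e) + m (snd e)) \<le> 2 * real d * (\<Delta> * N / 2)"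
      using dpos by (intro mult_left_mono) auto
    then have a2: "(\<Sum>e\<in>E. (2 * real d * m (fst e) + w e) + (2 * real d * m (snd e) + w (prod.swap e)))
        \<le> 2 * real d * (\<Delta> * N / 2) + N" using a2' by linarith
    show ?thesis using step1 a1 a2 by simp
  qed
  have final: "real d * N + real d * \<Delta> * N + N \<le> 6 * real d * \<Delta> * N"
  proof (cases "E = {}")
    case True
    then have "N = 0" unfolding N_def slack_norm1_def by simp
    then show ?thesis by simp
  next
    case False
    then obtain e where e: "e \<in> E" by blast
    have "fst e \<in> {1..n}" using e Esub by auto
    moreover have "card {e'\<in>E. fst e' = fst e \<or> snd e' = fst e} \<ge> 1"
    proof -
      have "finite {e'\<in>E. fst e' = fst e \<or> snd e' = fst e}" using finE by simp
      moreover have "e \<in> {e'\<in>E. fst e' = fst e \<or> snd e' = fst e}" using e by simp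
      then have "{e'\<in>E. fst e' = fst e \<or> snd e' = fst e} \<noteq> {}" by blast
      ultimately have "0 < card {e'\<in>E. fst e' = fst e \<or> snd e' = fst e}" using card_gt_0_iff by blast
      then show ?thesis by simp
    qed
    ultimately have D1: "1 \<le> \<Delta>" using card_le[of "fst e"] by simp
    have "real d * N * 1 \<le> real d * N * \<Delta>" using D1 dpos N0 by (intro mult_left_mono) auto
    then have "real d * N \<le> real d * \<Delta> * N" by (simp add: algebra_simps)
    moreover have "N \<le> real d * \<Delta> * N"
    proof -
      have "1 * 1 \<le> real d * \<Delta>" using D1 d by (intro mult_mono) auto
      then have "N * 1 \<le> N * (real d * \<Delta>)" using N0 by (intro mult_left_mono) auto
      then show ?thesis by (simp add: algebra_simps)
    qed
    moreover have "0 \<le> real d * \<Delta> * N" using N0 dpos D1 by simp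
    moreover have "6 * real d * \<Delta> * N = 6 * (real d * \<Delta> * N)" by simp
    ultimately show ?thesis by linarith
  qed
  have "marg_dist1 n E d Gn Ge Gn' Ge' \<le> 6 * real d * \<Delta> * N" using step2 final by linarith
  then show ?thesis using L unfolding N_def \<Delta>_def by blast
qed

theorem lemma7:
  fixes n d :: nat and E :: "(nat \<times> nat) set"
    and nu nu' :: "nat \<times> nat \<Rightarrow> nat \<Rightarrow> real"
    and Gn :: "nat \<Rightarrow> nat \<Rightarrow> real" and Ge :: "nat \<times> nat \<Rightarrow> nat \<Rightarrow> nat \<Rightarrow> real"
  assumes G: "graph n E" and d: "1 \<le> d"
    and nu: "slack_vec E d nu" and nu': "slack_vec E d nu'"
    and Gam: "L2slack n E d nu Gn Ge"
    and small: "slack_norminf E d nu' \<le> 1 / (2 * real d)"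
  shows "((\<forall>(i,j)\<in>E. simplex d (\<lambda>a. Gn i a + nu' (i,j) a) \<and> simplex d (\<lambda>a. Gn j a + nu' (j,i) a))
           \<longrightarrow> (\<exists>Gn' Ge'. L2slack n E d nu' Gn' Ge' \<and>
                 marg_dist1 n E d Gn Ge Gn' Ge' \<le> 2 * slack_norm1 E d (\<lambda>e a. nu e a - nu' e a)))
       \<and> ((\<forall>e\<in>E. \<forall>a<d. nu e a = 0 \<and> nu (prod.swap e) a = 0)
           \<longrightarrow> (\<exists>Gn' Ge'. L2slack n E d nu' Gn' Ge' \<and>
                 marg_dist1 n E d Gn Ge Gn' Ge' \<le> 6 * real d * real (max_deg n E) * slack_norm1 E d nu'))"
proof (intro conjI impI)
  assume H: "\<forall>(i,j)\<in>E. simplex d (\<lambda>a. Gn i a + nu' (i,j) a) \<and> simplex d (\<lambda>a. Gn j a + nu' (j,i) a)"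
  show "\<exists>Gn' Ge'. L2slack n E d nu' Gn' Ge' \<and>
                 marg_dist1 n E d Gn Ge Gn' Ge' \<le> 2 * slack_norm1 E d (\<lambda>e a. nu e a - nu' e a)"
    by (rule part1[OF G nu' Gam H])
next
  assume H: "\<forall>e\<in>E. \<forall>a<d. nu e a = 0 \<and> nu (prod.swap e) a = 0"
  show "\<exists>Gn' Ge'. L2slack n E d nu' Gn' Ge' \<and>
                 marg_dist1 n E d Gn Ge Gn' Ge' \<le> 6 * real d * real (max_deg n E) * slack_norm1 E d nu'"
    by (rule part2[OF G d nu' Gam small H])
qed

end
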